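(* Let $H$ be the additive subgroup of $\mathbb{R}^{n}$ generated by vectors $u_{1},\dots,u_{m}$, labelled so that $u_1,\dots,u_q$ is a basis of $\mathrm{vect}(H)$, where $q=\dim(\mathrm{vect}(H))$. Then $\widetilde{\mathrm{dim}}(\overline{H})=L(M_{H})+i\,(q-L(M_{H}))$.
   Context: $\mathrm{vect}(A)$ denotes the real span of $A\subset\mathbb{R}^n$; $\overline{H}$ the closure of $H$. Complex dimension: for an additive subgroup $G$ of $\mathbb{R}^n$, $\widetilde{\mathrm{dim}}(G):=p+i(s-p)$ where $p=\max\{\dim V: V\text{ a vector subspace},\ V\subset G\}$ and $s=\dim \mathrm{vect}(G)$. Definition of $L(M_H)$ for an ordered generating family $u_1,\dots,u_m$ of $H$ whose first $q$ members form a basis of $\mathrm{vect}(H)$: for each $k=q+1,\dots,m$ write $u_k=\sum_{j=1}^{q}\alpha_{k,j}u_j$ with $\alpha_{k,j}\in\mathbb{R}$. Choose $I_k\subset\{1,\dots,q\}$ such that $\{1\}\cup\{\alpha_{k,i}: i\in I_k\}$ is a longest sublist of $1,\alpha_{k,1},\dots,\alpha_{k,q}$ that is linearly independent over $\mathbb{Q}$ (containing $1$). Then for each $j\notin I_k$ there are rationals $t_{k,j}$ and $\gamma^{(k)}_{j,i}$ ($i\in I_k$) with $\alpha_{k,j}=t_{k,j}+\sum_{i\in I_k}\gamma^{(k)}_{j,i}\alpha_{k,i}$. Choose $N\in\mathbb{N}^*$ with $N\gamma^{(k)}_{i,j}=:m^{(k)}_{i,j}\in\mathbb{Z}$ for all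 relevant indices, and set, for $q+1\le k\le m$ and $j\in I_k$, $u'_{k,j}=Nu_j+\sum_{i\notin I_k} m^{(k)}_{i,j}u_i$. $M_H$ is the matrix whose columns are all the vectors $u'_{k,j}$ ($q+1\le k\le m$, $j\in I_k$), and $L(M_H)=\mathrm{rank}(M_H)$ (the dimension of the span of the $u'_{k,j}$; it is $0$ if there are none). *)

theory Defs
  imports "HOL-Analysis.Analysis"
begin

definition int_gen :: "(nat \<Rightarrow> 'a::real_vector) \<Rightarrow> nat \<Rightarrow> 'a set" where
  "int_gen u m = {x. \<exists>c::nat \<Rightarrow> int. x = (\<Sum>j=1..m. of_int (c j) *\<^sub>R u j)}"

definition cdim_p :: "'a::euclidean_space set \<Rightarrow> nat" where
  "cdim_p G = Max {dim V | V. subspace V \<and> V \<subseteq> G}"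

definition cdim :: "'a::euclidean_space set \<Rightarrow> complex" where
  "cdim G = of_nat (cdim_p G) + \<i> * (of_nat (dim (span G)) - of_nat (cdim_p G))"

definition rat_indep_with_one :: "(nat \<Rightarrow> real) \<Rightarrow> nat set \<Rightarrow> bool" where
  "rat_indep_with_one a I \<longleftrightarrow>
     (\<forall>c0 (c::nat \<Rightarrow> real). c0 \<in> \<rat> \<and> (\<forall>i\<in>I. c i \<in> \<rat>) \<and> c0 + (\<Sum>i\<in>I. c i * a i) = 0
        \<longrightarrow> c0 = 0 \<and> (\<forall>i\<in>I. c i = 0))"

text \<open>The vector u'_{k,j} = N u_j + sum_{i \<in> {1..q} - I_k} m^{(k)}_{i,j} u_i
  with m^{(k)}_{i,j} = N * gamma k i j.\<close>
definition u_prime ::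
  "(nat \<Rightarrow> 'a::real_vector) \<Rightarrow> nat \<Rightarrow> (nat \<Rightarrow> nat set) \<Rightarrow> (nat \<Rightarrow> nat \<Rightarrow> nat \<Rightarrow> real)
     \<Rightarrow> nat \<Rightarrow> nat \<Rightarrow> nat \<Rightarrow> 'a" where
  "u_prime u q I gamma N k j =
     of_nat N *\<^sub>R u j + (\<Sum>i\<in>{1..q} - I k. (of_nat N * gamma k i j) *\<^sub>R u i)"

text \<open>L(M_H): rank of the matrix whose columns are the u'_{k,j}.\<close>
definition L_MH ::
  "(nat \<Rightarrow> 'a::euclidean_space) \<Rightarrow> nat \<Rightarrow> nat \<Rightarrow> (nat \<Rightarrow> nat set) \<Rightarrow> (nat \<Rightarrow> nat \<Rightarrow> nat \<Rightarrow> real)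
     \<Rightarrow> nat \<Rightarrow> nat" where
  "L_MH u q m I gamma N =
     dim (span {u_prime u q I gamma N k j | k j. k \<in> {q+1..m} \<and> j \<in> I k})"

end

theory Submission
  imports Defs
begin

lemma common_denom:
  assumes "finite A" "\<forall>x\<in>A. f x \<in> \<rat>"
  shows "\<exists>D::nat. D > 0 \<and> (\<forall>x\<in>A. real D * f x \<in> \<int>)"
  using assms
proof (induction A rule: finite_induct)
  case empty then show ?case by (intro exI[of _ 1]) auto
next
  case (insert x A)
  then obtain D where D: "D > 0" "\<forall>y\<in>A. real D * f y \<in> \<int>" by auto
  from insert have "f x \<in> \<rat>" by auto
  then obtain a b where ab: "0 < b" "f x = of_int a / of_int b" by (elim Rats_cases') blast
  define D' where "D' = D * nat b"
  have "real D' = real D * of_int b" using ab by (simp add: D'_def)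
  have "real D' * f y \<in> \<int>" if "y \<in> insert x A" for y
  proof (cases "y = x")
    case True
    then have "real D' * f y = of_int (int D * a)" using ab \<open>real D' = _\<close> by simp
    then show ?thesis by simp
  next
    case False
    then have "y \<in> A" using that by auto
    then have "real D * f y \<in> \<int>" using D by auto
    moreover have "real D' * f y = (real D * f y) * of_int b" using \<open>real D' = _\<close> by simp
    ultimately show ?thesis by (metis Ints_mult Ints_of_int)
  qed
  moreover have "D' > 0" using D ab by (simp add: D'_def)
  ultimately show ?case by blast
qed

definition coordf :: "(nat \<Rightarrow> 'a::real_vector) \<Rightarrow> nat \<Rightarrow> nat \<Rightarrow> 'a \<Rightarrow> real" where
  "coordf u q p = (SOME g. linear g \<and> (\<forall>x\<in>u`{1..q}. g x = (if x = u p then 1 else 0)))"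

context
  fixes u :: "nat \<Rightarrow> 'a::euclidean_space" and q :: nat
  assumes inj: "inj_on u {1..q}" and ind: "independent (u ` {1..q})"
begin

lemma coordf_prop: "linear (coordf u q p) \<and> (\<forall>x\<in>u`{1..q}. coordf u q p x = (if x = u p then 1 else 0))"
proof -
  let ?P = "\<lambda>g. linear g \<and> (\<forall>x\<in>u`{1..q}. g x = (if x = u p then (1::real) else 0))"
  have "\<exists>g. ?P g"
    using linear_independent_extend[OF ind, of "\<lambda>x. if x = u p then (1::real) else 0"] by simp
  then have "?P (SOME g. ?P g)" by (rule someI_ex[of ?P])
  then show ?thesis unfolding coordf_def .
qed

lemma coordf_linear: "linear (coordf u q p)" using coordf_prop by blast

lemma coordf_u: assumes "j \<in> {1..q}" "p \<in> {1..q}" shows "coordf u q p (u j) = (if j = p then 1 else 0)"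
proof -
  have "coordf u q p (u j) = (if u j = u p then 1 else 0)" using coordf_prop[of p] assms(1) by blast
  moreover have "(u j = u p) = (j = p)" using inj assms by (simp add: inj_on_eq_iff)
  ultimately show ?thesis by simp
qed

lemma coord_expand: assumes xs: "x \<in> span (u ` {1..q})" shows "(\<Sum>j=1..q. coordf u q j x *\<^sub>R u j) = x"
proof -
  define E where "E x = (\<Sum>j=1..q. coordf u q j x *\<^sub>R u j)" for x
  have Eadd: "E (x + y) = E x + E y" for x y
    unfolding E_def using coordf_linear by (simp add: linear_add scaleR_add_left sum.distrib)
  have Escale: "E (c *\<^sub>R x) = c *\<^sub>R E x" for c x
    unfolding E_def using coordf_linear by (simp add: linear_scale scaleR_sum_right)
  have E0: "E 0 = 0" unfolding E_def using coordf_linear by (simp add: linear_0)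
  have "subspace {x. E x = x}"
    unfolding subspace_def by (simp add: Eadd Escale E0)
  moreover have "u ` {1..q} \<subseteq> {x. E x = x}"
  proof
    fix x assume "x \<in> u ` {1..q}"
    then obtain p where p: "p \<in> {1..q}" "x = u p" by auto
    have "(\<Sum>j=1..q. coordf u q j (u p) *\<^sub>R u j) = (\<Sum>j=1..q. (if j = p then u j else 0))"
      using p by (intro sum.cong) (auto simp: coordf_u)
    also have "\<dots> = u p" using p by (simp add: sum.delta')
    finally show "x \<in> {x. E x = x}" using p by (simp add: E_def)
  qed
  ultimately have "span (u ` {1..q}) \<subseteq> {x. E x = x}"
    by (rule span_minimal[rotated])
  then have "E x = x" using xs by blast
  then show ?thesis by (simp only: E_def)
qed

lemma f_rat_span:
  fixes f :: "'a \<Rightarrow> real"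
  assumes "linear f" "\<forall>j\<in>{1..q}. f (u j) \<in> \<rat>" "g \<in> span (u ` {1..q})"
    "\<forall>j\<in>{1..q}. coordf u q j g \<in> \<rat>"
  shows "f g \<in> \<rat>"
proof -
  have "f g = f (\<Sum>j=1..q. coordf u q j g *\<^sub>R u j)" using coord_expand[OF assms(3)] by simp
  also have "\<dots> = (\<Sum>j=1..q. coordf u q j g * f (u j))"
    using assms(1) by (simp add: linear_sum linear_scale)
  also have "\<dots> \<in> \<rat>"
  proof (rule Rats_sum)
    fix j assume "j \<in> {1..q}"
    then show "coordf u q j g * f (u j) \<in> \<rat>" using assms(2,4) by (intro Rats_mult) auto
  qed
  finally show ?thesis .
qed

lemma coordf_zero_imp:
  assumes "y \<in> span (u ` {1..q})" "\<forall>j\<in>{1..q}. coordf u q j y = 0" shows "y = 0"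
proof -
  have "y = (\<Sum>j=1..q. coordf u q j y *\<^sub>R u j)" by (rule coord_expand[OF assms(1), symmetric])
  also have "\<dots> = (\<Sum>j=1..q. (0::real) *\<^sub>R u j)" using assms(2) by (intro sum.cong) auto
  finally show ?thesis by simp
qed

lemma ratdual:
  assumes "finite G" "G \<subseteq> span (u`{1..q})" "\<forall>g\<in>G. \<forall>j\<in>{1..q}. coordf u q j g \<in> \<rat>"
   "y \<in> span (u`{1..q})" "y \<notin> span G"
  shows "\<exists>f::'a\<Rightarrow>real. linear f \<and> (\<forall>j\<in>{1..q}. f (u j) \<in> \<rat>) \<and> (\<forall>g\<in>G. f g = 0) \<and> f y \<noteq> 0"
  using assms
proof (induction "card G" arbitrary: G y rule: less_induct)
  case less
  show ?case
  proof (cases "G = {}")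
    case True
    then have "y \<noteq> 0" using less.prems by (auto simp: span_zero)
    then obtain p where p: "p \<in> {1..q}" "coordf u q p y \<noteq> 0"
      using coordf_zero_imp[OF less.prems(4)] by blast
    have "coordf u q p (u j) \<in> \<rat>" if "j \<in> {1..q}" for j
      using coordf_u[OF that p(1)] by simp
    then show ?thesis using p(2) coordf_linear[of p] True by blast
  next
    case False
    then obtain g where g: "g \<in> G" by blast
    define G0 where "G0 = G - {g}"
    have GG0: "G = insert g G0" using g by (auto simp: G0_def)
    have cardG0: "card G0 < card G" unfolding G0_def by (rule card_Diff1_less[OF less.prems(1) g])
    have gB: "g \<in> span (u`{1..q})" using g less.prems by auto
    show ?thesis
    proof (cases "\<forall>j\<in>{1..q}. coordf u q j g = 0")
      case True
      then have "g = 0" using coordf_zero_imp gB by blast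
      then have "span G = span G0" using GG0 by (simp add: span_insert_0)
      have "\<exists>f::'a\<Rightarrow>real. linear f \<and> (\<forall>j\<in>{1..q}. f (u j) \<in> \<rat>) \<and> (\<forall>g\<in>G0. f g = 0) \<and> f y \<noteq> 0"
        by (rule less.hyps[OF cardG0]) (use less.prems \<open>span G = span G0\<close> in \<open>auto simp: G0_def\<close>)
      then obtain f :: "'a \<Rightarrow> real" where f: "linear f" "\<forall>j\<in>{1..q}. f (u j) \<in> \<rat>" "\<forall>g\<in>G0. f g = 0" "f y \<noteq> 0"
        by blast
      have "f g = 0" using \<open>g = 0\<close> f(1) by (simp add: linear_0)
      then show ?thesis using f GG0 by blast
    next
      case False
      then obtain p where p: "p \<in> {1..q}" "coordf u q p g \<noteq> 0" by blast
      define rp where "rp = coordf u q p g"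
      have rp0: "rp \<noteq> 0" using p by (simp add: rp_def)
      have rpQ: "rp \<in> \<rat>" using p g less.prems by (auto simp: rp_def)
      define \<phi> where "\<phi> h = h - (coordf u q p h / rp) *\<^sub>R g" for h
      have lin: "linear (coordf u q j)" for j by (rule coordf_linear)
      have coord_phi: "coordf u q j (\<phi> h) = coordf u q j h - (coordf u q p h / rp) * coordf u q j g" for j h
        unfolding \<phi>_def using lin by (simp add: linear_diff linear_scale)
      have coordp_phi: "coordf u q p (\<phi> h) = 0" for h
        using coord_phi[of p h] rp0 by (simp add: rp_def)
      define G' where "G' = \<phi> ` G0"
      have cardG': "card G' < card G"
        using cardG0 card_image_le[of G0 \<phi>] less.prems(1) by (simp add: G'_def G0_def)
      have phiB: "\<phi> h \<in> span (u`{1..q})" if "h \<in> span (u`{1..q})" for h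
        unfolding \<phi>_def using that gB by (intro span_diff span_scale)
      have phiG: "\<phi> h \<in> span G" if "h \<in> span G" for h
        unfolding \<phi>_def by (intro span_diff span_scale that span_base[OF g])
      have G'1: "finite G'" using less.prems(1) by (simp add: G'_def G0_def)
      have G'2: "G' \<subseteq> span (u`{1..q})" using less.prems(2) phiB by (auto simp: G'_def G0_def)
      have G'3: "\<forall>h\<in>G'. \<forall>j\<in>{1..q}. coordf u q j h \<in> \<rat>"
      proof (intro ballI)
        fix h j assume "h \<in> G'" "j \<in> {1..q}"
        then obtain h0 where h0: "h0 \<in> G0" "h = \<phi> h0" by (auto simp: G'_def)
        have "coordf u q j h0 \<in> \<rat>" "coordf u q p h0 \<in> \<rat>" "coordf u q j g \<in> \<rat>"
          using h0 less.prems(3) g p \<open>j \<in> _\<close> by (auto simp: G0_def)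
        then show "coordf u q j h \<in> \<rat>" using rpQ by (simp add: h0 coord_phi)
      qed
      have y'B: "\<phi> y \<in> span (u`{1..q})" using phiB less.prems(4) by blast
      have y'nG: "\<phi> y \<notin> span G'"
      proof
        assume "\<phi> y \<in> span G'"
        moreover have "span G' \<subseteq> span G"
          using phiG GG0 by (intro span_minimal) (auto simp: G'_def intro: span_base)
        ultimately have "\<phi> y \<in> span G" by blast
        then have "\<phi> y + (coordf u q p y / rp) *\<^sub>R g \<in> span G"
          by (intro span_add span_scale \<open>\<phi> y \<in> span G\<close> span_base[OF g])
        then show False using less.prems(5) by (simp add: \<phi>_def)
      qed
      obtain f0 :: "'a \<Rightarrow> real" where f0: "linear f0" "\<forall>j\<in>{1..q}. f0 (u j) \<in> \<rat>" "\<forall>h\<in>G'. f0 h = 0" "f0 (\<phi> y) \<noteq> 0"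
        using less.hyps[OF cardG' G'1 G'2 G'3 y'B y'nG] by blast
      define c where "c = f0 g / rp"
      define f where "f x = f0 x - c * coordf u q p x" for x
      have linf: "linear f"
        unfolding f_def
        by (rule linearI) (use f0(1) lin in \<open>simp_all add: linear_add linear_scale algebra_simps\<close>)
      have f0gQ: "f0 g \<in> \<rat>"
        using f_rat_span[OF f0(1) f0(2) gB] g less.prems(3) by blast
      have fuQ: "\<forall>j\<in>{1..q}. f (u j) \<in> \<rat>"
        using f0(2) f0gQ rpQ p by (auto simp: f_def c_def coordf_u)
      have fg: "f g = 0" using rp0 by (simp add: f_def c_def rp_def)
      have f_phi: "f (\<phi> h) = f0 (\<phi> h)" for h by (simp add: f_def coordp_phi)
      have f_decomp: "f h = f (\<phi> h) + (coordf u q p h / rp) * f g" for h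
      proof -
        have "h = \<phi> h + (coordf u q p h / rp) *\<^sub>R g" by (simp add: \<phi>_def)
        then have "f h = f (\<phi> h + (coordf u q p h / rp) *\<^sub>R g)" by simp
        also have "\<dots> = f (\<phi> h) + (coordf u q p h / rp) * f g"
          using linf by (simp add: linear_add linear_scale)
        finally show ?thesis .
      qed
      have "\<forall>h\<in>G. f h = 0"
      proof
        fix h assume "h \<in> G"
        then have "h = g \<or> h \<in> G0" by (auto simp: G0_def)
        then show "f h = 0"
        proof
          assume "h \<in> G0"
          then have "f0 (\<phi> h) = 0" using f0(3) by (auto simp: G'_def)
          then show ?thesis using f_decomp[of h] f_phi fg by simp
        qed (simp add: fg)
      qed
      moreover have "f y \<noteq> 0" using f_decomp[of y] f_phi[of y] fg f0(4) by simp
      ultimately show ?thesis using linf fuQ by blast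
    qed
  qed
qed

end

lemma kron_apply:
  fixes a x :: "nat \<Rightarrow> real" and I :: "nat set" and c \<epsilon> :: real
  assumes finI: "finite I" and ind: "rat_indep_with_one a I" and c: "c \<noteq> 0" "c \<in> \<rat>" and eps: "\<epsilon> > 0"
  shows "\<exists>kk::int. \<exists>mm::nat \<Rightarrow> int. \<forall>i\<in>I. \<bar>of_int kk * c * a i - of_int (mm i) - x i\<bar> < \<epsilon>"
proof -
  define p where "p = card I"
  obtain e where e0: "bij_betw e {0..<p} I" using ex_bij_betw_nat_finite[OF finI] p_def by blast
  then have e: "bij_betw e {..<p} I" by (simp add: atLeast0LessThan)
  have einj: "inj_on e {..<p}" using e by (simp add: bij_betw_def)
  have eimg: "e ` {..<p} = I" using e by (simp add: bij_betw_def)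
  define ie where "ie = inv_into {..<p} e"
  have ie_e: "ie (e i) = i" if "i < p" for i using einj that by (simp add: ie_def inv_into_f_f)
  have e_ie: "ie j < p \<and> e (ie j) = j" if jI: "j \<in> I" for j
  proof -
    obtain i where "i < p" "j = e i" using jI eimg by auto
    then show ?thesis using ie_e by auto
  qed
  define \<theta> where "\<theta> i = (if i = p then 1 else c * a (e i))" for i
  have zind: "\<forall>i\<le>p. cf i = 0" if sum0: "(\<Sum>i\<le>p. of_int (cf i) * \<theta> i) = 0" for cf :: "nat \<Rightarrow> int"
  proof -
    have "{..p} = insert p {..<p}" by auto
    then have "(\<Sum>i\<le>p. of_int (cf i) * \<theta> i) = of_int (cf p) + (\<Sum>i<p. of_int (cf i) * (c * a (e i)))"
      by (simp add: \<theta>_def)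
    also have "(\<Sum>i<p. of_int (cf i) * (c * a (e i))) = (\<Sum>j\<in>I. (c * of_int (cf (ie j))) * a j)"
    proof -
      have "(\<Sum>j\<in>I. (c * of_int (cf (ie j))) * a j) = (\<Sum>i<p. (c * of_int (cf (ie (e i)))) * a (e i))"
        using sum.reindex_bij_betw[OF e, of "\<lambda>j. (c * of_int (cf (ie j))) * a j"] by simp
      also have "\<dots> = (\<Sum>i<p. of_int (cf i) * (c * a (e i)))"
        by (intro sum.cong) (auto simp: ie_e)
      finally show ?thesis by simp
    qed
    finally have eq: "of_int (cf p) + (\<Sum>j\<in>I. (c * of_int (cf (ie j))) * a j) = 0" using sum0 by simp
    have "of_int (cf p) = (0::real) \<and> (\<forall>j\<in>I. c * of_int (cf (ie j)) = 0)"
    proof -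
      have "\<forall>j\<in>I. c * of_int (cf (ie j)) \<in> \<rat>" using c(2) by (auto intro!: Rats_mult)
      moreover have "(of_int (cf p) :: real) \<in> \<rat>" by simp
      ultimately show ?thesis
        using ind eq unfolding rat_indep_with_one_def
        by (elim allE[of _ "of_int (cf p)"] allE[of _ "\<lambda>j. c * of_int (cf (ie j))"]) blast
    qed
    then have h1: "cf p = 0" and h2: "\<forall>j\<in>I. cf (ie j) = 0" using c by auto
    show ?thesis
    proof (intro allI impI)
      fix i assume "i \<le> p"
      show "cf i = 0"
      proof (cases "i = p")
        case True then show ?thesis using h1 by simp
      next
        case False
        then have "i < p" using \<open>i \<le> p\<close> by simp
        then have "e i \<in> I" using eimg by auto
        then show ?thesis using h2 ie_e[OF \<open>i < p\<close>] by force
      qed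
    qed
  qed
  have injt: "inj_on \<theta> {..p}"
  proof (rule inj_onI)
    fix i j assume ij: "i \<in> {..p}" "j \<in> {..p}" "\<theta> i = \<theta> j"
    show "i = j"
    proof (rule ccontr)
      assume "i \<noteq> j"
      define cf where "cf k = (if k = i then 1 else if k = j then -1 else (0::int))" for k
      have "(\<Sum>k\<le>p. of_int (cf k) * \<theta> k) = (\<Sum>k\<in>{..p}. (if k = i then \<theta> k else 0) - (if k = j then \<theta> k else 0))"
        by (intro sum.cong) (auto simp: cf_def \<open>i \<noteq> j\<close>)
      also have "\<dots> = \<theta> i - \<theta> j" using ij by (simp add: sum_subtractf)
      finally have "(\<Sum>k\<le>p. of_int (cf k) * \<theta> k) = 0" using ij by simp
      then have "cf i = 0" using zind ij by auto
      then show False by (simp add: cf_def)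
    qed
  qed
  interpret Z: Modules.module "(\<lambda>r. (*) (real_of_int r))"
    by (simp add: Modules.module.intro distrib_left mult.commute)
  have indp: "Z.independent (\<theta> ` {..p})"
    unfolding Z.dependent_explicit
  proof clarify
    fix T uu v
    assume T: "finite T" "T \<subseteq> \<theta> ` {..p}" "(\<Sum>v\<in>T. real_of_int (uu v) * v) = 0" "v \<in> T" "uu v \<noteq> 0"
    define S where "S = {i\<in>{..p}. \<theta> i \<in> T}"
    have injS: "inj_on \<theta> S" using injt by (rule inj_on_subset) (auto simp: S_def)
    have imS: "\<theta> ` S = T" using T(2) by (auto simp: S_def)
    define cf where "cf i = (if i \<in> S then uu (\<theta> i) else 0)" for i
    have "(\<Sum>i\<le>p. of_int (cf i) * \<theta> i) = (\<Sum>i\<in>{..p}. if i \<in> S then of_int (uu (\<theta> i)) * \<theta> i else 0)"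
      by (intro sum.cong) (auto simp: cf_def)
    also have "\<dots> = (\<Sum>i\<in>S. of_int (uu (\<theta> i)) * \<theta> i)"
      by (simp add: sum.inter_restrict[symmetric]) (rule sum.cong, auto simp: S_def)
    also have "\<dots> = (\<Sum>v\<in>T. real_of_int (uu v) * v)"
      using sum.reindex[OF injS, of "\<lambda>v. real_of_int (uu v) * v"] imS by simp
    finally have "(\<Sum>i\<le>p. of_int (cf i) * \<theta> i) = 0" using T(3) by simp
    then have all0: "\<forall>i\<le>p. cf i = 0" by (rule zind)
    obtain i0 where i0: "i0 \<in> S" "\<theta> i0 = v" using imS T(4) by auto
    then have "cf i0 = uu v" by (simp add: cf_def)
    moreover have "i0 \<le> p" using i0 by (simp add: S_def)
    ultimately show False using all0 T(5) by auto
  qed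
  have tp: "\<theta> p = 1" by (simp add: \<theta>_def)
  obtain kk mm where km: "\<And>i. i < p \<Longrightarrow> \<bar>of_int kk * \<theta> i - of_int (mm i) - x (e i)\<bar> < \<epsilon>"
    using Kronecker_thm_2[of \<theta> p \<epsilon> "\<lambda>i. x (e i)"] indp injt tp eps by blast
  have "\<forall>j\<in>I. \<bar>of_int kk * c * a j - of_int (mm (ie j)) - x j\<bar> < \<epsilon>"
  proof
    fix j assume "j \<in> I"
    then have "ie j < p" "e (ie j) = j" using e_ie by auto
    moreover then have "ie j \<noteq> p" by simp
    ultimately show "\<bar>of_int kk * c * a j - of_int (mm (ie j)) - x j\<bar> < \<epsilon>"
      using km[of "ie j"] by (simp add: \<theta>_def mult.assoc)
  qed
  then show ?thesis by (intro exI[of _ kk] exI[of _ "\<lambda>j. mm (ie j)"]) simp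
qed


lemma int_gen_add: "a \<in> int_gen u m \<Longrightarrow> b \<in> int_gen u m \<Longrightarrow> a + b \<in> int_gen u m"
proof -
  assume "a \<in> int_gen u m" "b \<in> int_gen u m"
  then obtain c c' where "a = (\<Sum>j=1..m. of_int (c j) *\<^sub>R u j)" "b = (\<Sum>j=1..m. of_int (c' j) *\<^sub>R u j)"
    by (auto simp: int_gen_def)
  then have "a + b = (\<Sum>j=1..m. of_int (c j + c' j) *\<^sub>R u j)"
    by (simp add: sum.distrib scaleR_add_left)
  then show ?thesis unfolding int_gen_def by (intro CollectI exI[of _ "\<lambda>j. c j + c' j"])
qed

lemma int_gen_scale: "a \<in> int_gen u m \<Longrightarrow> of_int z *\<^sub>R a \<in> int_gen u m"
proof -
  assume "a \<in> int_gen u m"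
  then obtain c where "a = (\<Sum>j=1..m. of_int (c j) *\<^sub>R u j)" by (auto simp: int_gen_def)
  then have "of_int z *\<^sub>R a = (\<Sum>j=1..m. of_int (z * c j) *\<^sub>R u j)"
    by (simp add: scaleR_sum_right)
  then show ?thesis unfolding int_gen_def by (intro CollectI exI[of _ "\<lambda>j. z * c j"])
qed

lemma int_gen_scale_Ints: "x \<in> \<int> \<Longrightarrow> a \<in> int_gen u m \<Longrightarrow> x *\<^sub>R a \<in> int_gen u m"
  by (elim Ints_cases) (simp add: int_gen_scale)

lemma int_gen_neg: "a \<in> int_gen u m \<Longrightarrow> - a \<in> int_gen u m"
  using int_gen_scale[of a u m "-1"] by simp

lemma int_gen_diff: "a \<in> int_gen u m \<Longrightarrow> b \<in> int_gen u m \<Longrightarrow> a - b \<in> int_gen u m"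
  using int_gen_add[of a u m "-b"] int_gen_neg[of b u m] by simp

lemma int_gen_zero: "0 \<in> int_gen u m"
  unfolding int_gen_def by (intro CollectI exI[of _ "\<lambda>_. 0"]) simp

lemma int_gen_gen: "j \<in> {1..m} \<Longrightarrow> u j \<in> int_gen u m"
proof -
  assume j: "j \<in> {1..m}"
  have "(\<Sum>i=1..m. of_int (if i = j then 1 else 0) *\<^sub>R u i) = (\<Sum>i=1..m. if i = j then u i else 0)"
    by (intro sum.cong) auto
  also have "\<dots> = u j" using j by (simp add: sum.delta')
  finally show ?thesis unfolding int_gen_def by (intro CollectI exI[of _ "\<lambda>i. if i = j then 1 else 0"]) simp
qed

lemma int_gen_sum: "finite F \<Longrightarrow> (\<forall>i\<in>F. x i \<in> int_gen u m) \<Longrightarrow> sum x F \<in> int_gen u m"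
  by (induction F rule: finite_induct) (auto intro: int_gen_add int_gen_zero)

lemma closure_add_closed:
  fixes S :: "'a::real_normed_vector set"
  assumes "\<And>a b. a \<in> S \<Longrightarrow> b \<in> S \<Longrightarrow> a + b \<in> S" "x \<in> closure S" "y \<in> closure S"
  shows "x + y \<in> closure S"
proof -
  obtain X where X: "\<forall>n. X n \<in> S" "X \<longlonglongrightarrow> x" using assms(2) by (auto simp: closure_sequential)
  obtain Y where Y: "\<forall>n. Y n \<in> S" "Y \<longlonglongrightarrow> y" using assms(3) by (auto simp: closure_sequential)
  have "\<forall>n. X n + Y n \<in> S" using X Y assms(1) by auto
  moreover have "(\<lambda>n. X n + Y n) \<longlonglongrightarrow> x + y" using X Y by (intro tendsto_add)
  ultimately show ?thesis by (auto simp: closure_sequential)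
qed


context
  fixes u :: "nat \<Rightarrow> 'a::euclidean_space"
    and m q N :: nat
    and alpha :: "nat \<Rightarrow> nat \<Rightarrow> real"
    and I :: "nat \<Rightarrow> nat set"
    and t :: "nat \<Rightarrow> nat \<Rightarrow> real"
    and gamma :: "nat \<Rightarrow> nat \<Rightarrow> nat \<Rightarrow> real"
  assumes qm: "q \<le> m"
    and basis_inj: "inj_on u {1..q}"
    and basis_indep: "independent (u ` {1..q})"
    and basis_span: "span (u ` {1..q}) = span (int_gen u m)"
    and alpha_def: "\<forall>k\<in>{q+1..m}. u k = (\<Sum>j=1..q. alpha k j *\<^sub>R u j)"
    and I_sub: "\<forall>k\<in>{q+1..m}. I k \<subseteq> {1..q}"
    and I_indep: "\<forall>k\<in>{q+1..m}. rat_indep_with_one (alpha k) (I k)"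
    and t_rat: "\<forall>k\<in>{q+1..m}. \<forall>j\<in>{1..q} - I k. t k j \<in> \<rat>"
    and gamma_rel: "\<forall>k\<in>{q+1..m}. \<forall>j\<in>{1..q} - I k.
                      alpha k j = t k j + (\<Sum>i\<in>I k. gamma k j i * alpha k i)"
    and N_pos: "N > 0"
    and N_int: "\<forall>k\<in>{q+1..m}. \<forall>j\<in>{1..q} - I k. \<forall>i\<in>I k. of_nat N * gamma k j i \<in> \<int>"
begin

lemma decomp:
  assumes k: "k \<in> {q+1..m}"
  shows "u k = (\<Sum>j\<in>{1..q} - I k. t k j *\<^sub>R u j)
               + (1 / real N) *\<^sub>R (\<Sum>i\<in>I k. alpha k i *\<^sub>R u_prime u q I gamma N k i)"
proof -
  define J where "J = {1..q} - I k"
  have IJ: "I k \<subseteq> {1..q}" using I_sub k by auto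
  have finI: "finite (I k)" using IJ finite_subset by blast
  have finJ: "finite J" by (simp add: J_def)
  have Nne: "real N \<noteq> 0" using N_pos by simp
  have "(1 / real N) *\<^sub>R (\<Sum>i\<in>I k. alpha k i *\<^sub>R u_prime u q I gamma N k i)
      = (\<Sum>i\<in>I k. (1 / real N) *\<^sub>R (alpha k i *\<^sub>R (real N *\<^sub>R u i + (\<Sum>j\<in>J. (real N * gamma k j i) *\<^sub>R u j))))"
    by (simp add: scaleR_sum_right u_prime_def J_def)
  also have "\<dots> = (\<Sum>i\<in>I k. alpha k i *\<^sub>R u i + (\<Sum>j\<in>J. (gamma k j i * alpha k i) *\<^sub>R u j))"
    using Nne by (intro sum.cong refl) (simp add: scaleR_add_right scaleR_sum_right algebra_simps)
  also have "\<dots> = (\<Sum>i\<in>I k. alpha k i *\<^sub>R u i) + (\<Sum>i\<in>I k. \<Sum>j\<in>J. (gamma k j i * alpha k i) *\<^sub>R u j)"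
    by (simp add: sum.distrib)
  also have "(\<Sum>i\<in>I k. \<Sum>j\<in>J. (gamma k j i * alpha k i) *\<^sub>R u j) = (\<Sum>j\<in>J. (\<Sum>i\<in>I k. gamma k j i * alpha k i) *\<^sub>R u j)"
    by (subst sum.swap) (simp add: scaleR_sum_left)
  finally have eq1: "(1 / real N) *\<^sub>R (\<Sum>i\<in>I k. alpha k i *\<^sub>R u_prime u q I gamma N k i)
      = (\<Sum>i\<in>I k. alpha k i *\<^sub>R u i) + (\<Sum>j\<in>J. (\<Sum>i\<in>I k. gamma k j i * alpha k i) *\<^sub>R u j)" .
  have "(\<Sum>j\<in>J. t k j *\<^sub>R u j) + (\<Sum>j\<in>J. (\<Sum>i\<in>I k. gamma k j i * alpha k i) *\<^sub>R u j)
        = (\<Sum>j\<in>J. alpha k j *\<^sub>R u j)"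
    unfolding sum.distrib[symmetric]
    using gamma_rel k by (intro sum.cong refl) (simp add: J_def scaleR_add_left)
  then have "(\<Sum>j\<in>J. t k j *\<^sub>R u j) + (1 / real N) *\<^sub>R (\<Sum>i\<in>I k. alpha k i *\<^sub>R u_prime u q I gamma N k i)
      = (\<Sum>j\<in>J. alpha k j *\<^sub>R u j) + (\<Sum>i\<in>I k. alpha k i *\<^sub>R u i)"
    unfolding eq1 by (simp add: algebra_simps)
  also have "\<dots> = (\<Sum>j=1..q. alpha k j *\<^sub>R u j)"
    unfolding J_def using sum.subset_diff[OF IJ, of "\<lambda>j. alpha k j *\<^sub>R u j"] by simp
  also have "\<dots> = u k" using alpha_def k by simp
  finally show ?thesis by (simp add: J_def)
qed

lemma u_in_H: "j \<in> {1..q} \<Longrightarrow> u j \<in> int_gen u m"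
  using qm by (intro int_gen_gen) auto

lemma uprime_in_H:
  assumes k: "k \<in> {q+1..m}" and i: "i \<in> I k"
  shows "u_prime u q I gamma N k i \<in> int_gen u m"
proof -
  have IJ: "I k \<subseteq> {1..q}" using I_sub k by auto
  show ?thesis unfolding u_prime_def
  proof (intro int_gen_add int_gen_sum ballI int_gen_scale_Ints)
    show "real N \<in> \<int>" by simp
    show "u i \<in> int_gen u m" using IJ i by (intro u_in_H) auto
  next
    fix j assume "j \<in> {1..q} - I k"
    then show "real N * gamma k j i \<in> \<int>" "u j \<in> int_gen u m"
      using N_int k i u_in_H by auto
  qed simp
qed

lemma part_a:
  assumes k: "k \<in> {q+1..m}" and i0: "i0 \<in> I k"
  shows "r *\<^sub>R u_prime u q I gamma N k i0 \<in> closure (int_gen u m)"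
proof -
  define J where "J = {1..q} - I k"
  define U where "U i = u_prime u q I gamma N k i" for i
  have IJ: "I k \<subseteq> {1..q}" using I_sub k by auto
  have finI: "finite (I k)" using IJ finite_subset by blast
  have finJ: "finite J" by (simp add: J_def)
  obtain M :: nat where M: "M > 0" "\<forall>j\<in>J. real M * t k j \<in> \<int>"
    using common_denom[OF finJ, of "t k"] t_rat k by (auto simp: J_def)
  define c where "c = real M / real N"
  have c: "c \<noteq> 0" "c \<in> \<rat>" using M(1) N_pos by (auto simp: c_def)
  define x where "x i = (if i = i0 then r else 0)" for i
  define K where "K = 1 + (\<Sum>i\<in>I k. norm (U i))"
  have K: "K > 0" unfolding K_def by (smt (verit) sum_nonneg norm_ge_zero)
  show ?thesis unfolding closure_approachable
  proof (intro allI impI)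
    fix \<epsilon> :: real assume eps: "\<epsilon> > 0"
    have eps': "\<epsilon> / K > 0" using eps K by simp
    obtain kk mm where km: "\<forall>i\<in>I k. \<bar>of_int kk * c * alpha k i - of_int (mm i) - x i\<bar> < \<epsilon> / K"
      using kron_apply[OF finI I_indep[rule_format, OF k] c eps', of x] by blast
    define h where "h = of_int (kk * int M) *\<^sub>R u k - (\<Sum>j\<in>J. (of_int kk * (real M * t k j)) *\<^sub>R u j)
                        - (\<Sum>i\<in>I k. of_int (mm i) *\<^sub>R U i)"
    have hH: "h \<in> int_gen u m"
      unfolding h_def
    proof (intro int_gen_diff int_gen_scale int_gen_sum ballI int_gen_scale_Ints)
      show "u k \<in> int_gen u m" using k by (intro int_gen_gen) auto
    next
      fix j assume "j \<in> J"
      then show "of_int kk * (real M * t k j) \<in> \<int>" "u j \<in> int_gen u m"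
        using M(2) u_in_H by (auto simp: J_def)
    next
      fix i assume "i \<in> I k"
      then show "U i \<in> int_gen u m" unfolding U_def using uprime_in_H k by blast
    qed (use finI finJ in auto)
    have uk: "u k = (\<Sum>j\<in>J. t k j *\<^sub>R u j) + (1 / real N) *\<^sub>R (\<Sum>i\<in>I k. alpha k i *\<^sub>R U i)"
      using decomp[OF k] by (simp add: J_def U_def)
    have "of_int (kk * int M) *\<^sub>R u k = (\<Sum>j\<in>J. (of_int kk * (real M * t k j)) *\<^sub>R u j)
            + (\<Sum>i\<in>I k. (of_int kk * c * alpha k i) *\<^sub>R U i)"
      unfolding uk using N_pos
      by (simp add: scaleR_add_right scaleR_sum_right c_def algebra_simps)
    then have h_eq: "h = (\<Sum>i\<in>I k. (of_int kk * c * alpha k i - of_int (mm i)) *\<^sub>R U i)"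
      unfolding h_def by (simp add: scaleR_diff_left sum_subtractf)
    have y_eq: "r *\<^sub>R U i0 = (\<Sum>i\<in>I k. x i *\<^sub>R U i)"
      using i0 finI by (simp add: x_def if_distrib[of "\<lambda>a. a *\<^sub>R _"] sum.delta' cong: if_cong)
    have "h - r *\<^sub>R U i0 = (\<Sum>i\<in>I k. (of_int kk * c * alpha k i - of_int (mm i) - x i) *\<^sub>R U i)"
      unfolding h_eq y_eq by (simp add: scaleR_diff_left sum_subtractf)
    then have "norm (h - r *\<^sub>R U i0) \<le> (\<Sum>i\<in>I k. \<bar>of_int kk * c * alpha k i - of_int (mm i) - x i\<bar> * norm (U i))"
      by (metis (no_types, lifting) norm_scaleR norm_sum sum.cong)
    also have "\<dots> \<le> (\<Sum>i\<in>I k. (\<epsilon> / K) * norm (U i))"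
      using km by (intro sum_mono mult_right_mono) auto
    also have "\<dots> = (\<epsilon> / K) * (K - 1)" by (simp add: K_def sum_distrib_left)
    also have "\<dots> < \<epsilon>" using eps K by (simp add: field_simps)
    finally have "dist h (r *\<^sub>R U i0) < \<epsilon>" by (simp add: dist_norm)
    then show "\<exists>y\<in>int_gen u m. dist y (r *\<^sub>R u_prime u q I gamma N k i0) < \<epsilon>"
      using hH by (auto simp: U_def)
  qed
qed


abbreviation "W \<equiv> {u_prime u q I gamma N k j | k j. k \<in> {q+1..m} \<and> j \<in> I k}"

lemma W_finite: "finite W"
proof -
  have "W \<subseteq> (\<lambda>(k,j). u_prime u q I gamma N k j) ` ({q+1..m} \<times> {1..q})"
    using I_sub by fastforce
  then show ?thesis by (rule finite_subset) simp
qed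

lemma W_span: "W \<subseteq> span (u ` {1..q})"
proof
  fix w assume "w \<in> W"
  then obtain k j where kj: "k \<in> {q+1..m}" "j \<in> I k" "w = u_prime u q I gamma N k j" by blast
  have "j \<in> {1..q}" using I_sub kj(1,2) by blast
  then show "w \<in> span (u ` {1..q})" unfolding kj(3) u_prime_def
    by (intro span_add span_sum span_scale span_base) auto
qed

lemma W_rat: "\<forall>w\<in>W. \<forall>p\<in>{1..q}. coordf u q p w \<in> \<rat>"
proof (intro ballI)
  fix w p assume "w \<in> W" "p \<in> {1..q}"
  then obtain k j where kj: "k \<in> {q+1..m}" "j \<in> I k" "w = u_prime u q I gamma N k j" by blast
  have jq: "j \<in> {1..q}" using I_sub kj(1,2) by blast
  have lin: "linear (coordf u q p)" by (rule coordf_linear[OF basis_inj basis_indep])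
  have cu: "coordf u q p (u i) \<in> \<rat>" if "i \<in> {1..q}" for i
    using coordf_u[OF basis_inj basis_indep that \<open>p \<in> _\<close>] by simp
  have "coordf u q p w = real N * coordf u q p (u j)
          + (\<Sum>i\<in>{1..q} - I k. (real N * gamma k i j) * coordf u q p (u i))"
    unfolding kj(3) u_prime_def using lin by (simp add: linear_add linear_sum linear_scale)
  also have "\<dots> \<in> \<rat>"
  proof (rule Rats_add)
    show "real N * coordf u q p (u j) \<in> \<rat>"
      by (rule Rats_mult) (use cu jq in auto)
    show "(\<Sum>i\<in>{1..q} - I k. (real N * gamma k i j) * coordf u q p (u i)) \<in> \<rat>"
    proof (rule Rats_sum)
      fix i assume i: "i \<in> {1..q} - I k"
      have "real N * gamma k i j \<in> \<int>" using N_int kj i by auto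
      then have "real N * gamma k i j \<in> \<rat>" by (metis Ints_cases Rats_of_int)
      then show "(real N * gamma k i j) * coordf u q p (u i) \<in> \<rat>"
        by (rule Rats_mult) (use cu i in auto)
    qed
  qed
  finally show "coordf u q p w \<in> \<rat>" .
qed

lemma H_span: "int_gen u m \<subseteq> span (u ` {1..q})"
  using basis_span span_superset by blast

lemma C_span: "closure (int_gen u m) \<subseteq> span (u ` {1..q})"
  by (intro closure_minimal H_span closed_subspace subspace_span)

lemma half_not_int: "(1/2::real) \<notin> \<int>"
proof
  assume "(1/2::real) \<in> \<int>"
  then obtain z where z: "(1/2::real) = of_int z" by (elim Ints_cases)
  then have "(1::real) = of_int (2 * z)" by simp
  then have "1 = 2 * z" by linarith
  then show False by presburger
qed

lemma part_b:
  assumes V: "subspace V" "V \<subseteq> closure (int_gen u m)"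
  shows "V \<subseteq> span W"
proof
  fix x assume xV: "x \<in> V"
  show "x \<in> span W"
  proof (rule ccontr)
    assume xW: "x \<notin> span W"
    have xB: "x \<in> span (u ` {1..q})" using xV V(2) C_span by blast
    obtain f :: "'a \<Rightarrow> real" where f: "linear f" "\<forall>j\<in>{1..q}. f (u j) \<in> \<rat>" "\<forall>g\<in>W. f g = 0" "f x \<noteq> 0"
      using ratdual[OF basis_inj basis_indep W_finite W_span W_rat xB xW] by blast
    obtain D :: nat where D: "D > 0" "\<forall>j\<in>{1..q}. real D * f (u j) \<in> \<int>"
      using common_denom[of "{1..q}" "\<lambda>j. f (u j)"] f(2) by auto
    have finS: "finite (Sigma {q+1..m} (\<lambda>k. {1..q} - I k))" by (intro finite_SigmaI) auto
    obtain M :: nat where M: "M > 0" "\<forall>kj\<in>Sigma {q+1..m} (\<lambda>k. {1..q} - I k). real M * t (fst kj) (snd kj) \<in> \<int>"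
      using common_denom[OF finS, of "\<lambda>kj. t (fst kj) (snd kj)"] t_rat by auto
    define g where "g y = real (D * M) * f y" for y
    have lg: "linear g" unfolding g_def
      by (rule linearI) (use f(1) in \<open>simp_all add: linear_add linear_scale algebra_simps\<close>)
    have gW: "g w = 0" if "w \<in> W" for w using f(3) that by (simp add: g_def)
    have g_uj: "g (u j) = real M * (real D * f (u j))" for j by (simp add: g_def)
    have g_small: "g (u j) \<in> \<int>" if "j \<in> {1..q}" for j
      using g_uj[of j] D(2) that by (metis Ints_mult Ints_of_nat)
    have g_big: "g (u k) \<in> \<int>" if k: "k \<in> {q+1..m}" for k
    proof -
      have e1: "g (u k) = (\<Sum>j\<in>{1..q} - I k. t k j * g (u j))
               + (1 / real N) * (\<Sum>i\<in>I k. alpha k i * g (u_prime u q I gamma N k i))"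
        by (subst decomp[OF k]) (simp only: linear_add[OF lg] linear_scale[OF lg] linear_sum[OF lg] real_scaleR_def)
      have e2: "(\<Sum>i\<in>I k. alpha k i * g (u_prime u q I gamma N k i)) = 0"
      proof (intro sum.neutral ballI)
        fix i assume "i \<in> I k"
        then have "u_prime u q I gamma N k i \<in> W" using k by blast
        then show "alpha k i * g (u_prime u q I gamma N k i) = 0" by (simp add: gW)
      qed
      have e3: "(\<Sum>j\<in>{1..q} - I k. t k j * g (u j)) \<in> \<int>"
      proof (intro Ints_sum)
        fix j assume j: "j \<in> {1..q} - I k"
        have "t k j * g (u j) = (real M * t k j) * (real D * f (u j))" by (simp add: g_uj)
        moreover have "real M * t k j \<in> \<int>" using M(2) k j by force
        moreover have "real D * f (u j) \<in> \<int>" using D(2) j by auto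
        ultimately show "t k j * g (u j) \<in> \<int>" by (metis Ints_mult)
      qed
      show ?thesis using e1 e2 e3 by simp
    qed
    have gH: "g y \<in> \<int>" if yH: "y \<in> int_gen u m" for y
    proof -
      obtain c where c: "y = (\<Sum>j=1..m. of_int (c j) *\<^sub>R u j)" using yH by (auto simp: int_gen_def)
      have "g y = (\<Sum>j=1..m. of_int (c j) * g (u j))"
        unfolding c using lg by (simp add: linear_sum linear_scale)
      also have "\<dots> \<in> \<int>"
      proof (intro Ints_sum Ints_mult)
        fix j assume j: "j \<in> {1..m}"
        show "of_int (c j) \<in> \<int>" by simp
        show "g (u j) \<in> \<int>"
        proof (cases "j \<le> q")
          case True then show ?thesis using j g_small by auto
        next
          case False then show ?thesis using j g_big by auto
        qed
      qed
      finally show ?thesis .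
    qed
    have contg: "\<And>a. continuous (at a) g"
      using lg by (simp add: linear_conv_bounded_linear linear_continuous_at)
    have "closure (int_gen u m) \<subseteq> g -` \<int>"
      by (intro closure_minimal continuous_closed_vimage closed_Ints contg) (use gH in auto)
    moreover have "(1 / (2 * g x)) *\<^sub>R x \<in> V" using V(1) xV by (simp add: subspace_scale)
    ultimately have "g ((1 / (2 * g x)) *\<^sub>R x) \<in> \<int>" using V(2) by blast
    moreover have "g x \<noteq> 0" using f(4) D(1) M(1) by (simp add: g_def)
    then have "g ((1 / (2 * g x)) *\<^sub>R x) = 1/2" using lg by (simp add: linear_scale)
    ultimately show False using half_not_int by simp
  qed
qed

lemma spanW_in_C: "span W \<subseteq> closure (int_gen u m)"
proof -
  define G0 where "G0 = {x. \<forall>r. r *\<^sub>R x \<in> closure (int_gen u m)}"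
  have addC: "a + b \<in> closure (int_gen u m)" if "a \<in> closure (int_gen u m)" "b \<in> closure (int_gen u m)" for a b
    by (rule closure_add_closed[OF _ that]) (rule int_gen_add)
  have "subspace G0"
    unfolding subspace_def
  proof (intro conjI ballI allI)
    show "0 \<in> G0" unfolding G0_def using int_gen_zero closure_subset by auto
  next
    fix x y assume "x \<in> G0" "y \<in> G0"
    then show "x + y \<in> G0" unfolding G0_def by (simp add: scaleR_add_right addC)
  next
    fix c x assume "x \<in> G0"
    then show "c *\<^sub>R x \<in> G0" unfolding G0_def by simp
  qed
  moreover have "W \<subseteq> G0"
  proof
    fix w assume "w \<in> W"
    then obtain k j where kj: "k \<in> {q+1..m}" "j \<in> I k" "w = u_prime u q I gamma N k j" by blast
    show "w \<in> G0" unfolding G0_def kj(3) using part_a[OF kj(1,2)] by blast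
  qed
  ultimately have "span W \<subseteq> G0" by (intro span_minimal)
  moreover have "G0 \<subseteq> closure (int_gen u m)"
  proof
    fix x assume "x \<in> G0"
    then have "1 *\<^sub>R x \<in> closure (int_gen u m)" unfolding G0_def by blast
    then show "x \<in> closure (int_gen u m)" by simp
  qed
  ultimately show ?thesis by blast
qed

lemma main_result:
  "cdim (closure (int_gen u m)) = of_nat (L_MH u q m I gamma N) + \<i> * (of_nat q - of_nat (L_MH u q m I gamma N))"
proof -
  define C where "C = closure (int_gen u m)"
  have L: "L_MH u q m I gamma N = dim (span W)" by (simp add: L_MH_def)
  have spanC: "span C = span (u ` {1..q})"
  proof
    have "C \<subseteq> span (u ` {1..q})" using C_span by (simp add: C_def)
    then show "span C \<subseteq> span (u ` {1..q})" by (intro span_minimal subspace_span)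
    have "span (u ` {1..q}) = span (int_gen u m)" by (rule basis_span)
    also have "\<dots> \<subseteq> span C" unfolding C_def by (intro span_mono closure_subset)
    finally show "span (u ` {1..q}) \<subseteq> span C" .
  qed
  have c1: "dim (span (u ` {1..q})) = card (u ` {1..q})" by (rule dim_span_eq_card_independent[OF basis_indep])
  have c2: "card (u ` {1..q}) = q" using card_image[OF basis_inj] by simp
  have dimC: "dim (span C) = q" unfolding spanC c1 c2 ..
  have bound: "dim V \<le> dim (span W)" if "subspace V" "V \<subseteq> C" for V
    by (rule dim_subset) (rule part_b, use that in \<open>simp_all add: C_def\<close>)
  have p: "cdim_p C = dim (span W)"
    unfolding cdim_p_def
  proof (rule Max_eqI)
    have "{dim V |V. subspace V \<and> V \<subseteq> C} \<subseteq> {..dim (span W)}"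
    proof
      fix y assume "y \<in> {dim V |V. subspace V \<and> V \<subseteq> C}"
      then obtain V where "y = dim V" "subspace V" "V \<subseteq> C" by blast
      then show "y \<in> {..dim (span W)}" using bound by simp
    qed
    then show "finite {dim V |V. subspace V \<and> V \<subseteq> C}" by (rule finite_subset) simp
  next
    fix y assume "y \<in> {dim V |V. subspace V \<and> V \<subseteq> C}"
    then obtain V where "y = dim V" "subspace V" "V \<subseteq> C" by blast
    then show "y \<le> dim (span W)" using bound by simp
  next
    have "span W \<subseteq> C" using spanW_in_C by (simp add: C_def)
    then show "dim (span W) \<in> {dim V |V. subspace V \<and> V \<subseteq> C}"
      by (intro CollectI exI[of _ "span W"]) (simp add: subspace_span)
  qed
  have "cdim C = of_nat (dim (span W)) + \<i> * (of_nat q - of_nat (dim (span W)))"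
    unfolding cdim_def p dimC ..
  then show ?thesis by (simp add: C_def L)
qed

end
theorem theorem1p5:
  fixes u :: "nat \<Rightarrow> real ^ 'n"
    and m q N :: nat
    and alpha :: "nat \<Rightarrow> nat \<Rightarrow> real"
    and I :: "nat \<Rightarrow> nat set"
    and t :: "nat \<Rightarrow> nat \<Rightarrow> real"
    and gamma :: "nat \<Rightarrow> nat \<Rightarrow> nat \<Rightarrow> real"
  assumes qm: "q \<le> m"
    and basis_inj: "inj_on u {1..q}"
    and basis_indep: "independent (u ` {1..q})"
    and basis_span: "span (u ` {1..q}) = span (int_gen u m)"
    and alpha_def: "\<forall>k\<in>{q+1..m}. u k = (\<Sum>j=1..q. alpha k j *\<^sub>R u j)"
    and I_sub: "\<forall>k\<in>{q+1..m}. I k \<subseteq> {1..q}"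
    and I_indep: "\<forall>k\<in>{q+1..m}. rat_indep_with_one (alpha k) (I k)"
    and I_longest: "\<forall>k\<in>{q+1..m}. \<forall>J. J \<subseteq> {1..q} \<and> rat_indep_with_one (alpha k) J
                       \<longrightarrow> card J \<le> card (I k)"
    and t_rat: "\<forall>k\<in>{q+1..m}. \<forall>j\<in>{1..q} - I k. t k j \<in> \<rat>"
    and gamma_rat: "\<forall>k\<in>{q+1..m}. \<forall>j\<in>{1..q} - I k. \<forall>i\<in>I k. gamma k j i \<in> \<rat>"
    and gamma_rel: "\<forall>k\<in>{q+1..m}. \<forall>j\<in>{1..q} - I k.
                      alpha k j = t k j + (\<Sum>i\<in>I k. gamma k j i * alpha k i)"
    and N_pos: "N > 0"
    and N_int: "\<forall>k\<in>{q+1..m}. \<forall>j\<in>{1..q} - I k. \<forall>i\<in>I k. of_nat N * gamma k j i \<in> \<int>"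
  shows "cdim (closure (int_gen u m))
           = of_nat (L_MH u q m I gamma N)
             + \<i> * (of_nat q - of_nat (L_MH u q m I gamma N))"
  by (rule main_result[OF qm basis_inj basis_indep basis_span alpha_def I_sub I_indep t_rat gamma_rel N_pos N_int])

end
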